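(* Let $K\ge1$, let $\boldsymbol{\lambda}=(\lambda_1,\dots,\lambda_K)$ with $\lambda_k\ge1$ for all $k$, and let $\beta>0$. For $\boldsymbol{\alpha}=e+\boldsymbol{\lambda}$ with $e\in\mathbb{R}^K_{\ge0}$ (the network output/evidence), put $S=\sum_k\alpha_k$, $\hat p_k=\alpha_k/S$, and for $y$ in the label space $\mathcal{Y}=\{y\in\mathbb{R}^K: y_i\in[0,1],\ \sum_i y_i=1\}$ define $$\mathcal{L}_{VI\text{-}EDL}(\boldsymbol{\alpha},y)=\sum_{k=1}^K(y_k-\hat p_k)^2+\sum_{k=1}^K\frac{\hat p_k(1-\hat p_k)}{S+1}+\beta\Big[\log\Gamma(S)-\sum_{k=1}^K\log\Gamma(\alpha_k)+\sum_{k=1}^K(\alpha_k-\lambda_k)\big(\psi(\alpha_k)-\psi(S)\big)\Big].$$ Then $\mathcal{L}_{VI\text{-}EDL}$ is globally Lipschitz continuous with respect to the network output, with Lipschitz constant $L_h$ (a uniform bound on the absolute values of the partial derivatives $|\partial\mathcal{L}_{VI\text{-}EDL}/\partial\alpha_i|$) satisfying $$L_h\le 2+\frac{1}{(K+1)^2}+\frac{2}{K(K+1)}+\beta\Big(2+\frac{1}{\min_j\lambda_j}+\frac{1}{\|\boldsymbol{\lambda}\|_1}\Big).$$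
   Context: $\Gamma$ is the Gamma function, $\psi$ the digamma function, and $\|\boldsymbol{\lambda}\|_1=\sum_k\lambda_k$. *)

theory Defs
  imports "HOL-Analysis.Analysis"
begin

text \<open>Label space: probability vectors indexed by the finite type 'k (K = CARD('k)).\<close>
definition label_space :: "('k::finite \<Rightarrow> real) set" where
  "label_space = {y. (\<forall>i. 0 \<le> y i \<and> y i \<le> 1) \<and> (\<Sum>i\<in>UNIV. y i) = 1}"

definition vi_edl :: "('k::finite \<Rightarrow> real) \<Rightarrow> real \<Rightarrow> ('k \<Rightarrow> real) \<Rightarrow> ('k \<Rightarrow> real) \<Rightarrow> real" where
  "vi_edl lam beta alpha y =
     (let S = (\<Sum>k\<in>UNIV. alpha k); p = (\<lambda>k. alpha k / S) in
       (\<Sum>k\<in>UNIV. (y k - p k)^2)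
     + (\<Sum>k\<in>UNIV. p k * (1 - p k) / (S + 1))
     + beta * (ln (Gamma S) - (\<Sum>k\<in>UNIV. ln (Gamma (alpha k)))
               + (\<Sum>k\<in>UNIV. (alpha k - lam k) * (Digamma (alpha k) - Digamma S))))"

end

theory Submission
  imports Defs "HOL-Real_Asymp.Real_Asymp"
begin


lemma trigamma_bound:
  fixes x :: real assumes x: "x \<ge> 1"
  shows "Polygamma 1 x \<le> 2 / x"
proof -
  have s: "(\<lambda>k. inverse ((x + of_nat k)^2)) sums Polygamma 1 x"
    using Polygamma_LIMSEQ[of x 1] x by (simp add: power2_eq_square)
  have lim: "(\<lambda>n. 2 / (x + real n)) \<longlonglongrightarrow> 0"
  proof -
    have "(\<lambda>n. 2 / (x + real n)) \<longlonglongrightarrow> 0" by real_asymp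
    thus ?thesis .
  qed
  have t: "(\<lambda>n. 2 / (x + real n) - 2 / (x + real (Suc n))) sums (2 / (x + real 0) - 0)"
    by (rule telescope_sums'[OF lim])
  have le: "inverse ((x + of_nat k)^2) \<le> 2 / (x + real k) - 2 / (x + real (Suc k))" for k
  proof -
    have p: "x + real k \<ge> 1" using x by simp
    have "2 / (x + real k) - 2 / (x + real (Suc k)) = 2 / ((x + real k) * (x + real k + 1))"
      using p by (simp add: field_simps)
    moreover have "inverse ((x + of_nat k)^2) \<le> 2 / ((x + real k) * (x + real k + 1))"
    proof -
      define u where "u = x + real k"
      have u: "u \<ge> 1" using p u_def by simp
      have "u * (u + 1) \<le> 2 * (u * u)" using u by (simp add: algebra_simps)
      hence "1 / (u * u) \<le> 2 / (u * (u + 1))" using u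
        by (simp add: divide_simps)
      thus ?thesis unfolding u_def by (simp add: power2_eq_square inverse_eq_divide)
    qed
    ultimately show ?thesis by simp
  qed
  from sums_le[OF le s t] show ?thesis by simp
qed

lemma trigamma_pos: "x > 0 \<Longrightarrow> Polygamma 1 (x::real) > 0"
  by (rule Polygamma_real_odd_pos) (auto elim!: nonpos_Ints_cases)



lemma lnGamma_deriv:
  fixes x :: real assumes "x > 0"
  shows "((\<lambda>t. ln (Gamma t)) has_real_derivative Digamma x) (at x)"
proof (rule has_field_derivative_transform_within_open[of ln_Gamma _ _ "{0<..}"])
  show "(ln_Gamma has_real_derivative Digamma x) (at x)"
    using assms by (rule has_field_derivative_ln_Gamma_real)
qed (use assms in \<open>auto simp: ln_Gamma_real_pos\<close>)

lemma Digamma_deriv: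
  fixes x :: real assumes "x > 0"
  shows "(Digamma has_real_derivative Polygamma 1 x) (at x)"
proof -
  have "x \<notin> \<int>\<^sub>\<le>\<^sub>0" using assms by (auto elim!: nonpos_Ints_cases)
  from has_field_derivative_Polygamma[OF this, of 0 UNIV] show ?thesis by simp
qed

lemma deriv_rat:
  fixes Sa Ya Qa yi tt :: real
  assumes S: "tt + Sa > 0"
  defines "S \<equiv> tt + Sa" and "Y \<equiv> Ya + yi * tt" and "Q \<equiv> Qa + tt^2"
  shows "((\<lambda>t. - 2*(Ya + yi*t)/(t+Sa) + (Qa+t^2)/(t+Sa)^2
          + (1 - (Qa+t^2)/(t+Sa)^2)/(t+Sa+1)) has_real_derivative
        ((-2*yi/S + 2*Y/S^2 + 2*tt/S^2 - 2*Q/S^3)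
         + (-2*tt/(S^2*(S+1)) + 2*Q/(S^3*(S+1)) - (1 - Q/S^2)/(S+1)^2))) (at tt)"
proof -
  have a: "tt + Sa \<noteq> 0" "tt + Sa + 1 \<noteq> 0" "(tt + Sa)^2 \<noteq> 0" using S by auto
  show ?thesis
    apply (rule derivative_eq_intros refl a)+
    unfolding Y_def Q_def S_def[symmetric] using a[folded S_def]
    apply (simp add: power2_eq_square power3_eq_cube)
    apply (simp add: divide_simps)
    apply algebra
    done
qed

lemma deriv_gam:
  fixes Sa Ga Ra L li tt :: real
  assumes tt: "tt > 0" and Sa: "Sa \<ge> 0"
  shows "((\<lambda>t. ln(Gamma(t+Sa)) - (Ga + ln(Gamma t)) + (Ra + (t - li)*Digamma t)
                  - (t+Sa-L)*Digamma(t+Sa)) has_real_derivative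
        ((tt - li)*Polygamma 1 tt - (tt + Sa - L)*Polygamma 1 (tt + Sa))) (at tt)"
proof -
  have p: "tt + Sa > 0" using tt Sa by simp
  have sh: "((\<lambda>t. t + Sa) has_real_derivative 1) (at tt)"
    by (rule derivative_eq_intros refl)+ simp
  have d1: "((\<lambda>t. ln(Gamma(t+Sa))) has_real_derivative Digamma(tt+Sa)) (at tt)"
    using DERIV_chain2[OF lnGamma_deriv[OF p] sh] by simp
  have d2: "((\<lambda>t. ln(Gamma t)) has_real_derivative Digamma tt) (at tt)"
    using lnGamma_deriv[OF tt] .
  have d3: "((\<lambda>t. Digamma t) has_real_derivative Polygamma 1 tt) (at tt)"
    using Digamma_deriv[OF tt] by simp
  have d4: "((\<lambda>t. Digamma(t+Sa)) has_real_derivative Polygamma 1 (tt+Sa)) (at tt)"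
    using DERIV_chain2[OF Digamma_deriv[OF p] sh] by simp
  show ?thesis
    apply (rule d1 d2 d3 d4 derivative_eq_intros refl)+
    apply (simp add: algebra_simps)
    done
qed



lemma sum_upd:
  fixes a :: "'k::finite \<Rightarrow> real" and h :: "'k \<Rightarrow> real \<Rightarrow> real"
  shows "(\<Sum>k\<in>UNIV. h k ((a(i:=t)) k)) = h i t + (\<Sum>k\<in>UNIV-{i}. h k (a k))"
proof -
  have "(\<Sum>k\<in>UNIV. h k ((a(i:=t)) k)) = h i ((a(i:=t)) i) + (\<Sum>k\<in>UNIV-{i}. h k ((a(i:=t)) k))"
    by (rule sum.remove) auto
  also have "(\<Sum>k\<in>UNIV-{i}. h k ((a(i:=t)) k)) = (\<Sum>k\<in>UNIV-{i}. h k (a k))"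
    by (rule sum.cong) auto
  finally show ?thesis by simp
qed

lemma decomp:
  fixes a lam y :: "'k::finite \<Rightarrow> real" and beta t :: real and i :: 'k
  assumes a: "\<forall>k. a k \<ge> 0" and t: "t > 0"
  defines "S0 \<equiv> \<Sum>k\<in>UNIV-{i}. a k"
    and "Y0 \<equiv> \<Sum>k\<in>UNIV-{i}. y k * a k"
    and "Q0 \<equiv> \<Sum>k\<in>UNIV-{i}. (a k)^2"
    and "G0 \<equiv> \<Sum>k\<in>UNIV-{i}. ln (Gamma (a k))"
    and "R0 \<equiv> \<Sum>k\<in>UNIV-{i}. (a k - lam k) * Digamma (a k)"
    and "L \<equiv> \<Sum>k\<in>UNIV. lam k"
    and "C \<equiv> \<Sum>k\<in>UNIV. (y k)^2"
  shows "vi_edl lam beta (a(i:=t)) y =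
     C + (- 2*(Y0 + y i*t)/(t+S0) + (Q0+t^2)/(t+S0)^2 + (1 - (Q0+t^2)/(t+S0)^2)/(t+S0+1))
     + beta*(ln(Gamma(t+S0)) - (G0 + ln(Gamma t)) + (R0 + (t - lam i)*Digamma t)
             - (t+S0-L)*Digamma(t+S0))"
proof -
  define al where "al = a(i:=t)"
  define S where "S = (\<Sum>k\<in>UNIV. al k)"
  have S0p: "S0 \<ge> 0" unfolding S0_def using a by (simp add: sum_nonneg)
  have SS: "S = t + S0" unfolding S_def al_def S0_def using sum_upd[of "\<lambda>k x. x" a i t] by simp
  have Sp: "S > 0" using SS S0p t by simp
  have YY: "(\<Sum>k\<in>UNIV. y k * al k) = y i * t + Y0"
    unfolding al_def Y0_def using sum_upd[of "\<lambda>k x. y k * x" a i t] by simp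
  have QQ: "(\<Sum>k\<in>UNIV. (al k)^2) = t^2 + Q0"
    unfolding al_def Q0_def using sum_upd[of "\<lambda>k x. x^2" a i t] by simp
  have GG: "(\<Sum>k\<in>UNIV. ln (Gamma (al k))) = ln (Gamma t) + G0"
    unfolding al_def G0_def using sum_upd[of "\<lambda>k x. ln (Gamma x)" a i t] by simp
  have RR: "(\<Sum>k\<in>UNIV. (al k - lam k) * Digamma (al k)) = (t - lam i) * Digamma t + R0"
    unfolding al_def R0_def using sum_upd[of "\<lambda>k x. (x - lam k) * Digamma x" a i t] by simp
  have P1: "(\<Sum>k\<in>UNIV. (y k - al k / S)^2) = C - 2 * (\<Sum>k\<in>UNIV. y k * al k) / S + (\<Sum>k\<in>UNIV. (al k)^2) / S^2"
  proof -
    have "(\<Sum>k\<in>UNIV. (y k - al k / S)^2) = (\<Sum>k\<in>UNIV. (y k)^2 - 2 / S * (y k * al k) + (al k)^2 / S^2)"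
      using Sp by (intro sum.cong) (auto simp: power2_eq_square field_simps)
    also have "\<dots> = C - 2 / S * (\<Sum>k\<in>UNIV. y k * al k) + (\<Sum>k\<in>UNIV. (al k)^2) / S^2"
      unfolding C_def by (simp add: sum.distrib sum_subtractf sum_distrib_left sum_divide_distrib)
    finally show ?thesis by simp
  qed
  have P2: "(\<Sum>k\<in>UNIV. al k / S * (1 - al k / S) / (S + 1)) = (1 - (\<Sum>k\<in>UNIV. (al k)^2) / S^2) / (S + 1)"
  proof -
    have "(\<Sum>k\<in>UNIV. al k / S * (1 - al k / S) / (S + 1)) = (\<Sum>k\<in>UNIV. (al k / S - (al k)^2 / S^2) / (S + 1))"
      using Sp by (intro sum.cong) (auto simp: power2_eq_square field_simps)
    also have "\<dots> = ((\<Sum>k\<in>UNIV. al k) / S - (\<Sum>k\<in>UNIV. (al k)^2) / S^2) / (S + 1)"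
      by (simp add: sum_subtractf sum_divide_distrib[symmetric])
    also have "(\<Sum>k\<in>UNIV. al k) / S = 1" using Sp unfolding S_def by simp
    finally show ?thesis by simp
  qed
  have P3: "(\<Sum>k\<in>UNIV. (al k - lam k) * (Digamma (al k) - Digamma S))
      = (\<Sum>k\<in>UNIV. (al k - lam k) * Digamma (al k)) - (S - L) * Digamma S"
  proof -
    have "(\<Sum>k\<in>UNIV. (al k - lam k) * (Digamma (al k) - Digamma S))
       = (\<Sum>k\<in>UNIV. (al k - lam k) * Digamma (al k)) - (\<Sum>k\<in>UNIV. (al k - lam k)) * Digamma S"
    proof -
      have "(\<Sum>k\<in>UNIV. (al k - lam k) * (Digamma (al k) - Digamma S))
         = (\<Sum>k\<in>UNIV. (al k - lam k) * Digamma (al k) - (al k - lam k) * Digamma S)"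
        by (simp add: algebra_simps)
      also have "\<dots> = (\<Sum>k\<in>UNIV. (al k - lam k) * Digamma (al k)) - (\<Sum>k\<in>UNIV. (al k - lam k)) * Digamma S"
        by (subst sum_subtractf) (simp only: sum_distrib_right)
      finally show ?thesis .
    qed
    also have "(\<Sum>k\<in>UNIV. (al k - lam k)) = S - L" unfolding S_def L_def by (simp add: sum_subtractf)
    finally show ?thesis .
  qed
  have "vi_edl lam beta al y =
       (\<Sum>k\<in>UNIV. (y k - al k / S)^2) + (\<Sum>k\<in>UNIV. al k / S * (1 - al k / S) / (S + 1))
     + beta * (ln (Gamma S) - (\<Sum>k\<in>UNIV. ln (Gamma (al k)))
               + (\<Sum>k\<in>UNIV. (al k - lam k) * (Digamma (al k) - Digamma S)))"
    unfolding vi_edl_def Let_def S_def ..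
  also have "\<dots> = C + (- 2*(Y0 + y i*t)/(t+S0) + (Q0+t^2)/(t+S0)^2 + (1 - (Q0+t^2)/(t+S0)^2)/(t+S0+1))
     + beta*(ln(Gamma(t+S0)) - (G0 + ln(Gamma t)) + (R0 + (t - lam i)*Digamma t)
             - (t+S0-L)*Digamma(t+S0))"
    unfolding P1 P2 P3 unfolding YY QQ GG RR unfolding SS by (simp add: algebra_simps add_divide_distrib[symmetric])
  finally show ?thesis unfolding al_def .
qed



lemma bound_rat:
  fixes K S Y Q yi t0 :: real
  assumes K: "K \<ge> 1" and SK: "S \<ge> K" and yi: "0 \<le> yi" "yi \<le> 1"
    and Y: "0 \<le> Y" "Y \<le> S" and t0: "0 < t0" "t0 \<le> S" and Q: "t0^2 \<le> Q" "Q \<le> S^2"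
    and case2: "K \<ge> 2 \<or> (yi = 1 \<and> Y = S \<and> t0 = S \<and> Q = S^2)"
  shows "\<bar>-2*yi/S + 2*Y/S^2 + 2*t0/S^2 - 2*Q/S^3\<bar>
       + \<bar>-2*t0/(S^2*(S+1)) + 2*Q/(S^3*(S+1)) - (1 - Q/S^2)/(S+1)^2\<bar>
       \<le> 2 + 1 / (K + 1)^2 + 2 / (K * (K + 1))"
proof -
  have Sp: "S > 0" using K SK by simp
  define p where "p = t0 / S"
  define q where "q = Q / S^2"
  define w where "w = Y / S"
  have p01: "0 \<le> p" "p \<le> 1" using t0 Sp by (auto simp: p_def divide_simps)
  have q01: "0 \<le> q" "q \<le> 1" using Q Sp t0 by (auto simp: q_def divide_simps intro: order_trans[OF zero_le_power2])
  have w01: "0 \<le> w" "w \<le> 1" using Y Sp by (auto simp: w_def divide_simps)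
  have D1: "-2*yi/S + 2*Y/S^2 + 2*t0/S^2 - 2*Q/S^3 = 2/S * (-yi + w + p - q)"
    using Sp by (simp add: p_def q_def w_def field_simps power2_eq_square power3_eq_cube)
  have D2: "-2*t0/(S^2*(S+1)) + 2*Q/(S^3*(S+1)) - (1 - Q/S^2)/(S+1)^2
      = 2/(S*(S+1)) * (q - p) - (1 - q)/(S+1)^2"
    using Sp by (simp add: p_def q_def divide_simps power2_eq_square power3_eq_cube)
  have b1: "\<bar>2/S * (-yi + w + p - q)\<bar> \<le> 2"
  proof (cases "K \<ge> 2")
    case True
    have "\<bar>-yi + w + p - q\<bar> \<le> 2" using yi w01 p01 q01 by linarith
    hence "\<bar>2/S\<bar> * \<bar>-yi + w + p - q\<bar> \<le> \<bar>2/S\<bar> * 2" by (intro mult_left_mono) auto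
    moreover have e: "\<bar>2/S\<bar> = 2/S" using Sp by simp
    ultimately have "\<bar>2/S * (-yi + w + p - q)\<bar> \<le> 2/S * 2" unfolding abs_mult e by blast
    also have "2/S * 2 \<le> 2" using True SK by (simp add: divide_simps)
    finally show ?thesis .
  next
    case False
    with case2 have "yi = 1" "Y = S" "t0 = S" "Q = S^2" by auto
    hence "-yi + w + p - q = 0" using Sp by (simp add: w_def p_def q_def)
    thus ?thesis by simp
  qed
  have b2: "\<bar>2/(S*(S+1)) * (q - p) - (1 - q)/(S+1)^2\<bar> \<le> 2/(S*(S+1)) + 1/(S+1)^2"
  proof -
    have "\<bar>2/(S*(S+1)) * (q - p)\<bar> \<le> 2/(S*(S+1))"
    proof -
      have "\<bar>q - p\<bar> \<le> 1" using p01 q01 by linarith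
      hence "\<bar>2/(S*(S+1))\<bar> * \<bar>q - p\<bar> \<le> \<bar>2/(S*(S+1))\<bar> * 1" by (intro mult_left_mono) auto
      moreover have e: "\<bar>2/(S*(S+1))\<bar> = 2/(S*(S+1))" using Sp by simp
      ultimately show ?thesis unfolding abs_mult e by simp
    qed
    moreover have "\<bar>(1 - q)/(S+1)^2\<bar> \<le> 1/(S+1)^2"
      using q01 Sp by (simp add: divide_simps)
    ultimately show ?thesis by linarith
  qed
  have m1: "2/(S*(S+1)) \<le> 2 / (K * (K + 1))"
    using K SK by (intro divide_left_mono mult_mono) auto
  have m2: "1/(S+1)^2 \<le> 1 / (K + 1)^2"
    using K SK by (intro divide_left_mono power_mono) auto
  show ?thesis unfolding D1 D2 using b1 b2 m1 m2 by linarith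
qed

lemma bound_gam:
  fixes t0 li S L :: real
  assumes "1 \<le> t0" "li \<le> t0" "1 \<le> S" "L \<le> S" "0 \<le> li" "0 \<le> L"
  shows "\<bar>(t0 - li)*Polygamma 1 t0 - (S - L)*Polygamma 1 S\<bar> \<le> 2"
proof -
  have h: "0 \<le> (x - l) * Polygamma 1 x \<and> (x - l) * Polygamma 1 x \<le> 2" if "1 \<le> x" "l \<le> x" "0 \<le> l" for x l :: real
  proof -
    have pp: "Polygamma 1 x > 0" using that by (intro trigamma_pos) auto
    have "(x - l) * Polygamma 1 x \<le> x * Polygamma 1 x" using pp that by (intro mult_right_mono) auto
    also have "\<dots> \<le> x * (2 / x)" using trigamma_bound[OF that(1)] that by (intro mult_left_mono) auto
    also have "\<dots> = 2" using that by simp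
    finally show ?thesis using pp that by simp
  qed
  from h[of t0 li] h[of S L] assms show ?thesis by linarith
qed



lemma part1:
  fixes lam :: "'k::finite \<Rightarrow> real" and beta :: real and i :: 'k
  assumes lam_ge: "\<forall>k. lam k \<ge> 1" and beta_pos: "beta > 0"
    and e: "\<forall>k. e k \<ge> 0" and y: "y \<in> label_space"
  shows "\<exists>D. ((\<lambda>t. vi_edl lam beta ((\<lambda>k. e k + lam k)(i := t)) y)
                     has_real_derivative D) (at (e i + lam i)) \<and>
             \<bar>D\<bar> \<le> 2 + 1 / (real CARD('k) + 1)^2 + 2 / (real CARD('k) * (real CARD('k) + 1))
                 + beta * (2 + 1 / Min (range lam) + 1 / (\<Sum>k\<in>UNIV. lam k))"
proof -
  define a where "a = (\<lambda>k. e k + lam k)"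
  define t0 where "t0 = a i"
  define S0 where "S0 = (\<Sum>k\<in>UNIV-{i}. a k)"
  define Y0 where "Y0 = (\<Sum>k\<in>UNIV-{i}. y k * a k)"
  define Q0 where "Q0 = (\<Sum>k\<in>UNIV-{i}. (a k)^2)"
  define G0 where "G0 = (\<Sum>k\<in>UNIV-{i}. ln (Gamma (a k)))"
  define R0 where "R0 = (\<Sum>k\<in>UNIV-{i}. (a k - lam k) * Digamma (a k))"
  define L where "L = (\<Sum>k\<in>UNIV. lam k)"
  define C where "C = (\<Sum>k\<in>UNIV. (y k)^2)"
  define K where "K = real CARD('k)"
  have a1: "\<And>k. a k \<ge> 1" using lam_ge e unfolding a_def by (smt (verit))
  have a0: "\<forall>k. a k \<ge> 0" using a1 by (smt (verit))
  have yk: "\<And>k. 0 \<le> y k \<and> y k \<le> 1" using y unfolding label_space_def by auto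
  have ysum: "(\<Sum>k\<in>UNIV. y k) = 1" using y unfolding label_space_def by auto
  have t0p: "t0 \<ge> 1" using a1 unfolding t0_def by simp
  have S0p: "S0 \<ge> 0" unfolding S0_def using a0 by (simp add: sum_nonneg)
  define S where "S = t0 + S0"
  define Y where "Y = Y0 + y i * t0"
  define Q where "Q = Q0 + t0^2"
  have rem: "\<And>f::'k\<Rightarrow>real. (\<Sum>k\<in>UNIV. f k) = f i + (\<Sum>k\<in>UNIV-{i}. f k)"
    by (rule sum.remove) auto
  have SS: "S = (\<Sum>k\<in>UNIV. a k)" unfolding S_def S0_def t0_def using rem[of a] by simp
  have YY: "Y = (\<Sum>k\<in>UNIV. y k * a k)" unfolding Y_def Y0_def t0_def using rem[of "\<lambda>k. y k * a k"] by simp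
  have QQ: "Q = (\<Sum>k\<in>UNIV. (a k)^2)" unfolding Q_def Q0_def t0_def using rem[of "\<lambda>k. (a k)^2"] by simp
  have SK: "S \<ge> K"
  proof -
    have "(\<Sum>k\<in>(UNIV::'k set). (1::real)) \<le> (\<Sum>k\<in>UNIV. a k)" using a1 by (intro sum_mono) auto
    thus ?thesis unfolding SS K_def by simp
  qed
  have K1: "K \<ge> 1" unfolding K_def by simp
  have Y0: "0 \<le> Y" "Y \<le> S"
  proof -
    show "0 \<le> Y" unfolding YY using yk a0 by (intro sum_nonneg) auto
    have "(\<Sum>k\<in>UNIV. y k * a k) \<le> (\<Sum>k\<in>UNIV. a k)"
      using yk a0 by (intro sum_mono) (simp add: mult_left_le_one_le)
    thus "Y \<le> S" unfolding YY SS .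
  qed
  have Q0p: "Q0 \<ge> 0" unfolding Q0_def by (simp add: sum_nonneg)
  have Qb: "t0^2 \<le> Q" "Q \<le> S^2"
  proof -
    show "t0^2 \<le> Q" unfolding Q_def using Q0p by simp
    have "a k \<le> S" for k
    proof -
      have "a k \<le> (\<Sum>k\<in>UNIV. a k)" using a0 by (intro member_le_sum) auto
      thus ?thesis unfolding SS .
    qed
    hence "(\<Sum>k\<in>UNIV. (a k)^2) \<le> (\<Sum>k\<in>UNIV. a k * S)"
      using a0 by (intro sum_mono) (simp add: power2_eq_square mult_left_mono)
    also have "\<dots> = S^2" unfolding SS by (simp add: sum_distrib_right power2_eq_square)
    finally show "Q \<le> S^2" unfolding QQ .
  qed
  have t0S: "0 < t0" "t0 \<le> S" using t0p S0p unfolding S_def by auto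
  have case2: "K \<ge> 2 \<or> (y i = 1 \<and> Y = S \<and> t0 = S \<and> Q = S^2)"
  proof (cases "K \<ge> 2")
    case False
    have c1: "CARD('k) \<ge> 1" using K1 unfolding K_def by simp
    have c2: "CARD('k) < 2" using False unfolding K_def by simp
    from c1 c2 have "CARD('k) = 1" by linarith
    hence "card (UNIV - {i}) = 0" by (simp add: card_Diff_singleton)
    hence E: "UNIV - {i} = {}" using card_eq_0_iff[of "UNIV - {i}"] by simp
    have "y i = 1" using ysum rem[of y] E by simp
    moreover have "S0 = 0" "Y0 = 0" "Q0 = 0" unfolding S0_def Y0_def Q0_def E by simp_all
    ultimately show ?thesis unfolding S_def Y_def Q_def by simp
  qed simp
  have Lb: "L \<le> S" "0 \<le> L"
  proof -
    have "(\<Sum>k\<in>UNIV. lam k) \<le> (\<Sum>k\<in>UNIV. a k)" unfolding a_def using e by (intro sum_mono) auto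
    thus "L \<le> S" unfolding L_def SS .
    show "0 \<le> L" unfolding L_def using lam_ge by (smt (verit) sum_nonneg)
  qed
  have Dr: "((\<lambda>t. - 2*(Y0 + y i*t)/(t+S0) + (Q0+t^2)/(t+S0)^2
          + (1 - (Q0+t^2)/(t+S0)^2)/(t+S0+1)) has_real_derivative
        ((-2*y i/S + 2*Y/S^2 + 2*t0/S^2 - 2*Q/S^3)
         + (-2*t0/(S^2*(S+1)) + 2*Q/(S^3*(S+1)) - (1 - Q/S^2)/(S+1)^2))) (at t0)"
    unfolding S_def Y_def Q_def using deriv_rat[where Sa=S0 and Ya=Y0 and Qa=Q0 and yi="y i" and tt=t0] t0S S0p by simp
  have Dg: "((\<lambda>t. ln(Gamma(t+S0)) - (G0 + ln(Gamma t)) + (R0 + (t - lam i)*Digamma t)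
                  - (t+S0-L)*Digamma(t+S0)) has_real_derivative
        ((t0 - lam i)*Polygamma 1 t0 - (S - L)*Polygamma 1 S)) (at t0)"
    unfolding S_def using deriv_gam[where Sa=S0 and Ga=G0 and Ra=R0 and L=L and li="lam i" and tt=t0] t0S S0p by simp
  define D1 where "D1 = -2*y i/S + 2*Y/S^2 + 2*t0/S^2 - 2*Q/S^3"
  define D2 where "D2 = -2*t0/(S^2*(S+1)) + 2*Q/(S^3*(S+1)) - (1 - Q/S^2)/(S+1)^2"
  define D3 where "D3 = (t0 - lam i)*Polygamma 1 t0 - (S - L)*Polygamma 1 S"
  have Dall: "((\<lambda>t. C + (- 2*(Y0 + y i*t)/(t+S0) + (Q0+t^2)/(t+S0)^2
          + (1 - (Q0+t^2)/(t+S0)^2)/(t+S0+1)) + beta * (ln(Gamma(t+S0)) - (G0 + ln(Gamma t)) + (R0 + (t - lam i)*Digamma t)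
                  - (t+S0-L)*Digamma(t+S0))) has_real_derivative (0 + (D1 + D2) + beta * D3)) (at t0)"
    unfolding D1_def D2_def D3_def
    by (rule DERIV_add[OF DERIV_add[OF DERIV_const Dr] DERIV_cmult[OF Dg]])
  have Dv: "((\<lambda>t. vi_edl lam beta (a(i := t)) y) has_real_derivative (0 + (D1 + D2) + beta * D3)) (at t0)"
  proof (rule has_field_derivative_transform_within_open[OF Dall, of "{0<..}"])
    show "open {0::real<..}" by simp
    show "t0 \<in> {0<..}" using t0S by simp
    fix t :: real assume "t \<in> {0<..}"
    thus "C + (- 2*(Y0 + y i*t)/(t+S0) + (Q0+t^2)/(t+S0)^2
          + (1 - (Q0+t^2)/(t+S0)^2)/(t+S0+1)) + beta * (ln(Gamma(t+S0)) - (G0 + ln(Gamma t)) + (R0 + (t - lam i)*Digamma t)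
                  - (t+S0-L)*Digamma(t+S0)) = vi_edl lam beta (a(i := t)) y"
      using decomp[where a=a and t=t and lam=lam and y=y and beta=beta and i=i] a0 unfolding S0_def Y0_def Q0_def G0_def R0_def L_def C_def by simp
  qed
  have b12: "\<bar>D1\<bar> + \<bar>D2\<bar> \<le> 2 + 1 / (K + 1)^2 + 2 / (K * (K + 1))"
    unfolding D1_def D2_def
    by (rule bound_rat[OF K1 SK _ _ Y0 t0S Qb case2]) (use yk in auto)
  have b3: "\<bar>D3\<bar> \<le> 2" unfolding D3_def
    by (rule bound_gam) (use t0p t0S Lb lam_ge e in \<open>auto simp: t0_def a_def intro: order_trans[OF zero_le_one]\<close>)
  have minp: "Min (range lam) > 0"
  proof -
    have "Min (range lam) \<in> range lam" by (rule Min_in) auto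
    thus ?thesis using lam_ge by (smt (verit) imageE)
  qed
  have "\<bar>0 + (D1 + D2) + beta * D3\<bar> \<le> \<bar>D1\<bar> + \<bar>D2\<bar> + beta * \<bar>D3\<bar>"
  proof -
    have "\<bar>beta*D3\<bar> = beta*\<bar>D3\<bar>" using beta_pos by (simp add: abs_mult)
    thus ?thesis using abs_triangle_ineq[of "D1+D2" "beta*D3"] abs_triangle_ineq[of D1 D2] by simp
  qed
  also have "\<dots> \<le> 2 + 1 / (K + 1)^2 + 2 / (K * (K + 1)) + beta * 2"
    using b12 mult_left_mono[OF b3, of beta] beta_pos by linarith
  also have "\<dots> \<le> 2 + 1 / (K + 1)^2 + 2 / (K * (K + 1)) + beta * (2 + 1 / Min (range lam) + 1 / L)"
  proof -
    have "0 \<le> 1 / Min (range lam)" using less_imp_le[OF divide_pos_pos[OF zero_less_one minp]] .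
    moreover have "0 \<le> 1 / L" using Lb(2) by simp
    ultimately have "2 \<le> 2 + 1 / Min (range lam) + 1 / L" by linarith
    thus ?thesis using beta_pos by (intro add_left_mono mult_left_mono) auto
  qed
  finally have bnd: "\<bar>0 + (D1 + D2) + beta * D3\<bar> \<le> 2 + 1 / (K + 1)^2 + 2 / (K * (K + 1)) + beta * (2 + 1 / Min (range lam) + 1 / L)" .
  show ?thesis
  proof (intro exI conjI)
    show "((\<lambda>t. vi_edl lam beta ((\<lambda>k. e k + lam k)(i := t)) y) has_real_derivative (0 + (D1 + D2) + beta * D3)) (at (e i + lam i))"
      using Dv unfolding a_def t0_def .
    show "\<bar>0 + (D1 + D2) + beta * D3\<bar> \<le> 2 + 1 / (real CARD('k) + 1)^2 + 2 / (real CARD('k) * (real CARD('k) + 1))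
                 + beta * (2 + 1 / Min (range lam) + 1 / (\<Sum>k\<in>UNIV. lam k))"
      using bnd unfolding K_def L_def .
  qed
qed



lemma lip1:
  fixes f :: "real \<Rightarrow> real" and a b B :: real
  assumes H: "\<forall>x. min a b \<le> x \<and> x \<le> max a b \<longrightarrow> (\<exists>D. (f has_real_derivative D) (at x) \<and> \<bar>D\<bar> \<le> B)"
  shows "\<bar>f a - f b\<bar> \<le> B * \<bar>a - b\<bar>"
proof -
  have main: "\<bar>f v - f u\<bar> \<le> B * (v - u)" if uv: "u < v" and
    H': "\<forall>x. u \<le> x \<and> x \<le> v \<longrightarrow> (\<exists>D. (f has_real_derivative D) (at x) \<and> \<bar>D\<bar> \<le> B)" for u v
  proof -
    define f' where "f' x = (SOME D. (f has_real_derivative D) (at x) \<and> \<bar>D\<bar> \<le> B)" for x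
    have f': "(f has_real_derivative f' x) (at x) \<and> \<bar>f' x\<bar> \<le> B" if "u \<le> x" "x \<le> v" for x
    proof -
      have "\<exists>D. (f has_real_derivative D) (at x) \<and> \<bar>D\<bar> \<le> B" using H' that by blast
      thus ?thesis unfolding f'_def by (rule someI_ex)
    qed
    have "\<exists>z. u < z \<and> z < v \<and> f v - f u = (v - u) * f' z"
      by (rule MVT2[OF uv]) (use f' in blast)
    then obtain z where z: "u < z" "z < v" "f v - f u = (v - u) * f' z" by blast
    have e1: "\<bar>f v - f u\<bar> = (v - u) * \<bar>f' z\<bar>" using z uv by (simp add: abs_mult)
    have fz: "\<bar>f' z\<bar> \<le> B" using f'[of z] z(1,2) by linarith
    have e2: "(v - u) * \<bar>f' z\<bar> \<le> (v - u) * B" using fz uv by (intro mult_left_mono) simp_all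
    have "\<bar>f v - f u\<bar> \<le> (v - u) * B" using e1 e2 by linarith
    thus ?thesis by (simp only: mult.commute)
  qed
  consider "a < b" | "a = b" | "b < a" by linarith
  thus ?thesis
  proof cases
    case 1 thus ?thesis using main[of a b] H by (simp add: abs_minus_commute)
  next
    case 3 thus ?thesis using main[of b a] H by simp
  qed simp
qed


theorem theoremB1:
  fixes lam :: "'k::finite \<Rightarrow> real" and beta :: real
  assumes lam_ge: "\<forall>k. lam k \<ge> 1"
    and beta_pos: "beta > 0"
  defines "B \<equiv> 2 + 1 / (real CARD('k) + 1)^2 + 2 / (real CARD('k) * (real CARD('k) + 1))
                 + beta * (2 + 1 / Min (range lam) + 1 / (\<Sum>k\<in>UNIV. lam k))"
  shows "(\<forall>e y i. (\<forall>k. e k \<ge> 0) \<longrightarrow> y \<in> label_space \<longrightarrow>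
            (\<exists>D. ((\<lambda>t. vi_edl lam beta ((\<lambda>k. e k + lam k)(i := t)) y)
                     has_real_derivative D) (at (e i + lam i)) \<and> \<bar>D\<bar> \<le> B))
       \<and> (\<forall>e e' y. (\<forall>k. e k \<ge> 0) \<longrightarrow> (\<forall>k. e' k \<ge> 0) \<longrightarrow> y \<in> label_space \<longrightarrow>
            \<bar>vi_edl lam beta (\<lambda>k. e k + lam k) y - vi_edl lam beta (\<lambda>k. e' k + lam k) y\<bar>
              \<le> B * (\<Sum>k\<in>UNIV. \<bar>e k - e' k\<bar>))"
proof
  show P1: "\<forall>e y i. (\<forall>k. e k \<ge> 0) \<longrightarrow> y \<in> label_space \<longrightarrow>
            (\<exists>D. ((\<lambda>t. vi_edl lam beta ((\<lambda>k. e k + lam k)(i := t)) y)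
                     has_real_derivative D) (at (e i + lam i)) \<and> \<bar>D\<bar> \<le> B)"
    unfolding B_def by (intro allI impI) (rule part1[OF lam_ge beta_pos]; assumption)
  show "\<forall>e e' y. (\<forall>k. e k \<ge> 0) \<longrightarrow> (\<forall>k. e' k \<ge> 0) \<longrightarrow> y \<in> label_space \<longrightarrow>
            \<bar>vi_edl lam beta (\<lambda>k. e k + lam k) y - vi_edl lam beta (\<lambda>k. e' k + lam k) y\<bar>
              \<le> B * (\<Sum>k\<in>UNIV. \<bar>e k - e' k\<bar>)"
  proof (intro allI impI)
    fix e e' y :: "'k \<Rightarrow> real"
    assume e: "\<forall>k. e k \<ge> 0" and e': "\<forall>k. e' k \<ge> 0" and y: "y \<in> label_space"
    define F where "F E = vi_edl lam beta (\<lambda>k. E k + lam k) y" for E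
    define EA where "EA A = (\<lambda>k. if k \<in> A then e' k else e k)" for A
    have ind: "\<bar>F e - F (EA A)\<bar> \<le> B * (\<Sum>k\<in>A. \<bar>e k - e' k\<bar>)" if "finite A" for A
      using that
    proof (induction A rule: finite_induct)
      case empty
      have "EA {} = e" unfolding EA_def by auto
      thus ?case by simp
    next
      case (insert x A)
      define E where "E = EA A"
      have Enn: "\<forall>k. E k \<ge> 0" unfolding E_def EA_def using e e' by auto
      have Ex: "E x = e x" unfolding E_def EA_def using insert by simp
      have E2: "EA (insert x A) = E(x := e' x)" unfolding E_def EA_def by auto
      define f where "f t = vi_edl lam beta ((\<lambda>k. E k + lam k)(x := t)) y" for t
      have fa: "f (e x + lam x) = F E" unfolding f_def F_def
        by (rule arg_cong[where f="\<lambda>g. vi_edl lam beta g y"]) (auto simp: Ex)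
      have fb: "f (e' x + lam x) = F (EA (insert x A))" unfolding f_def F_def E2
        by (rule arg_cong[where f="\<lambda>g. vi_edl lam beta g y"]) auto
      have "\<bar>f (e x + lam x) - f (e' x + lam x)\<bar> \<le> B * \<bar>(e x + lam x) - (e' x + lam x)\<bar>"
      proof (rule lip1, intro allI impI)
        fix t assume t: "min (e x + lam x) (e' x + lam x) \<le> t \<and> t \<le> max (e x + lam x) (e' x + lam x)"
        define E' where "E' = E(x := t - lam x)"
        have "lam x \<le> t" using t e[rule_format, of x] e'[rule_format, of x] by (simp add: min_def split: if_splits)
        hence E'nn: "\<forall>k. E' k \<ge> 0" unfolding E'_def using Enn by auto
        have fe: "f = (\<lambda>s. vi_edl lam beta ((\<lambda>k. E' k + lam k)(x := s)) y)"
          unfolding f_def E'_def by (intro ext arg_cong[where f="\<lambda>g. vi_edl lam beta g y"]) auto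
        have tx: "E' x + lam x = t" unfolding E'_def by simp
        show "\<exists>D. (f has_real_derivative D) (at t) \<and> \<bar>D\<bar> \<le> B"
          using P1[rule_format, where i=x and e=E', OF E'nn[rule_format] y] unfolding fe tx .
      qed
      hence step: "\<bar>F E - F (EA (insert x A))\<bar> \<le> B * \<bar>e x - e' x\<bar>" unfolding fa fb by simp
      have "\<bar>F e - F (EA (insert x A))\<bar> \<le> \<bar>F e - F E\<bar> + \<bar>F E - F (EA (insert x A))\<bar>" by linarith
      also have "\<dots> \<le> B * (\<Sum>k\<in>A. \<bar>e k - e' k\<bar>) + B * \<bar>e x - e' x\<bar>"
        using insert.IH step unfolding E_def by linarith
      also have "\<dots> = B * (\<Sum>k\<in>insert x A. \<bar>e k - e' k\<bar>)"
        using insert by (simp add: algebra_simps)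
      finally show ?case .
    qed
    have "EA UNIV = e'" unfolding EA_def by auto
    thus "\<bar>vi_edl lam beta (\<lambda>k. e k + lam k) y - vi_edl lam beta (\<lambda>k. e' k + lam k) y\<bar>
              \<le> B * (\<Sum>k\<in>UNIV. \<bar>e k - e' k\<bar>)"
      using ind[of UNIV] unfolding F_def by simp
  qed
qed

end
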